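(* If $L\subseteq\Sigma^\omega$ is LPBA-recognizable, then there are finitely many Parikh-recognizable languages $U_1,\dots,U_n\subseteq\Sigma^*$ and regular languages $V_1,\dots,V_n\subseteq\Sigma^*$ with $L=\bigcup_{i=1}^nU_iV_i^\omega$.
   Context: For $V\subseteq\Sigma^*$, $V^\omega=\{w_1w_2\cdots\mid w_i\in V\setminus\{\varepsilon\}\}$. A semi-linear set in $\mathbb{N}^d$ (resp. $(\mathbb{N}\cup\{\infty\})^d$) is a finite union of sets $\{b_0+\sum_{j=1}^\ell b_jz_j\mid z_j\in\mathbb{N}\}$ with $b_j\in\mathbb{N}^d$ (resp. $(\mathbb{N}\cup\{\infty\})^d$), with arithmetic $z+\infty=\infty+z=\infty+\infty=\infty$, $z\cdot\infty=\infty\cdot z=\infty$ for $z>0$, $0\cdot\infty=\infty\cdot0=0$. A Parikh automaton (PA) of dimension $d$ is $(Q,\Sigma,q_0,\Delta,F,C)$ with finite $Q$, $q_0\in Q$, $F\subseteq Q$, finite $\Delta\subseteq Q\times\Sigma\times\mathbb{N}^d\times Q$, semi-linear $C\subseteq\mathbb{N}^d$; it accepts a finite word $x_1\cdots x_n$ if there is a run $r_i=(p_{i-1},x_i,\mathbf{v}_i,p_i)\in\Delta$, $p_0=q_0$, with $p_n\in F$ and $\sum_i\mathbf{v}_i\in C$; Parikh-recognizable languages are those accepted by PA. A limit Parikh–Büchi automaton (LPBA) is such a tuple but with $C\subseteq(\mathbb{N}\cup\{\infty\})^d$ semi-linear; a run $r_1r_2\cdots$ on an infinite word ($r_i=(p_{i-1},\alpha_i,\mathbf{v}_i,p_i)$,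 $p_0=q_0$) is accepting if $p_i\in F$ for infinitely many $i$ and $\rho(r)\in C$, where the $j$-th component of $\rho(r)$ is $\infty$ if infinitely many $\mathbf{v}_i$ have nonzero $j$-th component and otherwise is the finite sum of the $j$-th components. $L$ is LPBA-recognizable if it is the set of infinite words with an accepting run of some LPBA. *)

theory Defs
  imports Main "HOL-Library.Extended_Nat"
begin

definition vadd :: "'n::plus list \<Rightarrow> 'n list \<Rightarrow> 'n list" where
  "vadd u v = map2 (+) u v"

definition vsum :: "nat \<Rightarrow> 'n::monoid_add list list \<Rightarrow> 'n list" where
  "vsum d vs = foldr vadd vs (replicate d 0)"

text \<open>Scalar multiplication by a natural number z; for enat this gives
  0 * \<infinity> = 0 and z * \<infinity> = \<infinity> for z > 0.\<close>
definition smult_nat :: "nat \<Rightarrow> 'n::semiring_1 list \<Rightarrow> 'n list" where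
  "smult_nat z b = map (\<lambda>x. of_nat z * x) b"

definition lin_set :: "'n::semiring_1 list \<Rightarrow> 'n list list \<Rightarrow> 'n list set" where
  "lin_set b0 bs = {v. \<exists>zs::nat list. length zs = length bs \<and>
       v = foldr vadd (map2 smult_nat zs bs) b0}"

text \<open>Semi-linear subsets of N^d (resp. (N \<union> {\<infinity>})^d when 'n = enat).\<close>
definition semilinear :: "nat \<Rightarrow> 'n::semiring_1 list set \<Rightarrow> bool" where
  "semilinear d C \<longleftrightarrow> (\<exists>P :: ('n list \<times> 'n list list) list.
      (\<forall>(b0, bs) \<in> set P. length b0 = d \<and> (\<forall>b \<in> set bs. length b = d)) \<and>
      C = (\<Union>(b0, bs) \<in> set P. lin_set b0 bs))"

definition PA_wf :: "'a set \<Rightarrow> nat \<Rightarrow> nat set \<Rightarrow> nat \<Rightarrow>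
    (nat \<times> 'a \<times> 'v list \<times> nat) set \<Rightarrow> nat set \<Rightarrow> bool" where
  "PA_wf \<Sigma> d Q q0 \<Delta> F \<longleftrightarrow> finite Q \<and> q0 \<in> Q \<and> F \<subseteq> Q \<and> finite \<Delta> \<and>
     (\<forall>(p, a, v, q) \<in> \<Delta>. p \<in> Q \<and> a \<in> \<Sigma> \<and> length v = d \<and> q \<in> Q)"

definition PA_accepts :: "nat \<Rightarrow> nat \<Rightarrow> (nat \<times> 'a \<times> nat list \<times> nat) set \<Rightarrow> nat set
    \<Rightarrow> nat list set \<Rightarrow> 'a list \<Rightarrow> bool" where
  "PA_accepts d q0 \<Delta> F C w \<longleftrightarrow> (\<exists>ps vs. length ps = length w + 1 \<and> length vs = length w \<and>
     ps ! 0 = q0 \<and> (\<forall>i < length w. (ps ! i, w ! i, vs ! i, ps ! (i+1)) \<in> \<Delta>) \<and>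
     ps ! length w \<in> F \<and> vsum d vs \<in> C)"

definition parikh_recognizable :: "'a set \<Rightarrow> 'a list set \<Rightarrow> bool" where
  "parikh_recognizable \<Sigma> U \<longleftrightarrow> (\<exists>d Q q0 \<Delta> F C. PA_wf \<Sigma> d Q q0 \<Delta> F \<and> semilinear d C \<and>
     U = {w. PA_accepts d q0 \<Delta> F C w})"

definition NFA_accepts :: "nat \<Rightarrow> (nat \<times> 'a \<times> nat) set \<Rightarrow> nat set \<Rightarrow> 'a list \<Rightarrow> bool" where
  "NFA_accepts q0 \<delta> F w \<longleftrightarrow> (\<exists>ps. length ps = length w + 1 \<and> ps ! 0 = q0 \<and>
     (\<forall>i < length w. (ps ! i, w ! i, ps ! (i+1)) \<in> \<delta>) \<and> ps ! length w \<in> F)"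

definition regular :: "'a set \<Rightarrow> 'a list set \<Rightarrow> bool" where
  "regular \<Sigma> V \<longleftrightarrow> (\<exists>Q q0 \<delta> F. finite Q \<and> q0 \<in> Q \<and> F \<subseteq> Q \<and> finite \<delta> \<and>
     (\<forall>(p, a, q) \<in> \<delta>. p \<in> Q \<and> a \<in> \<Sigma> \<and> q \<in> Q) \<and>
     V = {w. NFA_accepts q0 \<delta> F w})"

type_synonym 'a iword = "nat \<Rightarrow> 'a"

definition iwords :: "'a set \<Rightarrow> 'a iword set" where
  "iwords \<Sigma> = {\<alpha>. \<forall>n. \<alpha> n \<in> \<Sigma>}"

definition rho :: "nat \<Rightarrow> (nat \<Rightarrow> nat list) \<Rightarrow> enat list" where
  "rho d v = map (\<lambda>j. if infinite {i. v i ! j \<noteq> 0} then \<infinity>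
                      else enat (\<Sum>i \<in> {i. v i ! j \<noteq> 0}. v i ! j)) [0..<d]"

definition LPBA_accepts :: "nat \<Rightarrow> nat \<Rightarrow> (nat \<times> 'a \<times> nat list \<times> nat) set \<Rightarrow> nat set
    \<Rightarrow> enat list set \<Rightarrow> 'a iword \<Rightarrow> bool" where
  "LPBA_accepts d q0 \<Delta> F C \<alpha> \<longleftrightarrow> (\<exists>(p :: nat \<Rightarrow> nat) (v :: nat \<Rightarrow> nat list).
     p 0 = q0 \<and> (\<forall>i. (p i, \<alpha> i, v i, p (Suc i)) \<in> \<Delta>) \<and>
     infinite {i. p i \<in> F} \<and> rho d v \<in> C)"

definition LPBA_recognizable :: "'a set \<Rightarrow> 'a iword set \<Rightarrow> bool" where
  "LPBA_recognizable \<Sigma> L \<longleftrightarrow> (\<exists>d Q q0 \<Delta> F C. PA_wf \<Sigma> d Q q0 \<Delta> F \<and> semilinear d C \<and>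
     L = {\<alpha>. LPBA_accepts d q0 \<Delta> F C \<alpha>})"

definition conc :: "'a list \<Rightarrow> 'a iword \<Rightarrow> 'a iword" where
  "conc u \<beta> = (\<lambda>n. if n < length u then u ! n else \<beta> (n - length u))"

definition omega_pow :: "'a list set \<Rightarrow> 'a iword set" where
  "omega_pow V = {\<alpha>. \<exists>ws :: nat \<Rightarrow> 'a list. (\<forall>i. ws i \<in> V \<and> ws i \<noteq> []) \<and>
     (\<forall>i k. k < length (ws i) \<longrightarrow> \<alpha> ((\<Sum>j<i. length (ws j)) + k) = ws i ! k)}"

definition conc_omega :: "'a list set \<Rightarrow> 'a list set \<Rightarrow> 'a iword set" where
  "conc_omega U V = {conc u \<beta> | u \<beta>. u \<in> U \<and> \<beta> \<in> omega_pow V}"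

end

theory Submission
  imports Defs
begin

lemma vadd_len[simp]: "length (vadd u v) = min (length u) (length v)"
  by (simp add: vadd_def)

lemma vadd_nth[simp]: "j < length u \<Longrightarrow> j < length v \<Longrightarrow> vadd u v ! j = u ! j + v ! j"
  by (simp add: vadd_def)

lemma lin_comb:
  fixes b0 :: "'n::semiring_1 list"
  assumes "length b0 = d" "\<forall>b\<in>set bs. length b = d" "length zs = length bs"
  shows "length (foldr vadd (map2 smult_nat zs bs) b0) = d \<and>
    (\<forall>j<d. foldr vadd (map2 smult_nat zs bs) b0 ! j = b0 ! j + (\<Sum>k<length bs. of_nat (zs!k) * bs!k!j))"
  using assms
proof (induction bs arbitrary: zs)
  case Nil
  then show ?case by simp
next
  case (Cons b bs)
  then obtain z zs' where zs: "zs = z # zs'" by (cases zs) auto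
  have IH: "length (foldr vadd (map2 smult_nat zs' bs) b0) = d \<and>
    (\<forall>j<d. foldr vadd (map2 smult_nat zs' bs) b0 ! j = b0 ! j + (\<Sum>k<length bs. of_nat (zs'!k) * bs!k!j))"
    using Cons zs by auto
  have lb: "length b = d" using Cons by auto
  show ?case
  proof (intro conjI allI impI)
    show "length (foldr vadd (map2 smult_nat zs (b # bs)) b0) = d"
      using IH lb zs by (simp add: smult_nat_def)
  next
    fix j assume j: "j < d"
    have "foldr vadd (map2 smult_nat zs (b # bs)) b0 ! j = of_nat z * b ! j + (b0 ! j + (\<Sum>k<length bs. of_nat (zs'!k) * bs!k!j))"
      using IH lb zs j by (simp add: smult_nat_def)
    also have "\<dots> = b0 ! j + (\<Sum>k<length (b#bs). of_nat (zs!k) * (b#bs)!k!j)"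
      unfolding zs by (simp del: sum.lessThan_Suc add: sum.lessThan_Suc_shift algebra_simps)
    finally show "foldr vadd (map2 smult_nat zs (b # bs)) b0 ! j = b0 ! j + (\<Sum>k<length (b#bs). of_nat (zs!k) * (b#bs)!k!j)" .
  qed
qed

lemma lin_set_iff:
  fixes b0 :: "'n::semiring_1 list"
  assumes "length b0 = d" "\<forall>b\<in>set bs. length b = d"
  shows "x \<in> lin_set b0 bs \<longleftrightarrow> length x = d \<and>
     (\<exists>z::nat\<Rightarrow>nat. \<forall>j<d. x!j = b0!j + (\<Sum>k<length bs. of_nat (z k) * bs!k!j))"
proof
  assume "x \<in> lin_set b0 bs"
  then obtain zs where zs: "length zs = length bs" "x = foldr vadd (map2 smult_nat zs bs) b0"
    unfolding lin_set_def by auto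
  from lin_comb[OF assms zs(1)] zs(2) show "length x = d \<and>
     (\<exists>z::nat\<Rightarrow>nat. \<forall>j<d. x!j = b0!j + (\<Sum>k<length bs. of_nat (z k) * bs!k!j))"
    by (intro conjI exI[of _ "\<lambda>k. zs!k"]) auto
next
  assume "length x = d \<and> (\<exists>z::nat\<Rightarrow>nat. \<forall>j<d. x!j = b0!j + (\<Sum>k<length bs. of_nat (z k) * bs!k!j))"
  then obtain z where lx: "length x = d" and z: "\<forall>j<d. x!j = b0!j + (\<Sum>k<length bs. of_nat (z k) * bs!k!j)"
    by auto
  define zs where "zs = map z [0..<length bs]"
  have lz: "length zs = length bs" by (simp add: zs_def)
  have "x = foldr vadd (map2 smult_nat zs bs) b0"
    using lin_comb[OF assms lz] lx z by (intro nth_equalityI) (auto simp: zs_def)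
  then show "x \<in> lin_set b0 bs" unfolding lin_set_def using lz by blast
qed

lemma vsum_nth:
  fixes vs :: "'n::comm_monoid_add list list"
  assumes "\<forall>v\<in>set vs. length v = d"
  shows "length (vsum d vs) = d \<and> (\<forall>j<d. vsum d vs ! j = (\<Sum>i<length vs. vs!i!j))"
  using assms
proof (induction vs)
  case Nil
  then show ?case by (simp add: vsum_def)
next
  case (Cons v vs)
  then show ?case by (auto simp del: sum.lessThan_Suc simp: vsum_def sum.lessThan_Suc_shift)
qed

lemma semilinear_empty: "semilinear d {}"
  unfolding semilinear_def by (intro exI[of _ "[]"]) auto

lemma semilinear_Un: "semilinear d A \<Longrightarrow> semilinear d B \<Longrightarrow> semilinear d (A \<union> B)"
  unfolding semilinear_def
proof (elim exE conjE)
  fix P1 P2 :: "('a list \<times> 'a list list) list"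
  assume "\<forall>(b0, bs)\<in>set P1. length b0 = d \<and> (\<forall>b\<in>set bs. length b = d)"
    "A = (\<Union>(b0, bs)\<in>set P1. lin_set b0 bs)"
    "\<forall>(b0, bs)\<in>set P2. length b0 = d \<and> (\<forall>b\<in>set bs. length b = d)"
    "B = (\<Union>(b0, bs)\<in>set P2. lin_set b0 bs)"
  then show "\<exists>P. (\<forall>(b0, bs)\<in>set P. length b0 = d \<and> (\<forall>b\<in>set bs. length b = d)) \<and>
         A \<union> B = (\<Union>(b0, bs)\<in>set P. lin_set b0 bs)"
    by (intro exI[of _ "P1 @ P2"]) auto
qed

lemma semilinear_UN: "finite I \<Longrightarrow> (\<And>i. i \<in> I \<Longrightarrow> semilinear d (C i)) \<Longrightarrow> semilinear d (\<Union>i\<in>I. C i)"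
  by (induction I rule: finite_induct) (auto intro: semilinear_Un semilinear_empty)

lemma semilinear_lin: "length b0 = d \<Longrightarrow> \<forall>b\<in>set bs. length b = d \<Longrightarrow> semilinear d (lin_set b0 bs)"
  unfolding semilinear_def by (intro exI[of _ "[(b0,bs)]"]) auto

lemma enat_sum: "(\<Sum>k\<in>A. enat (f k)) = enat (\<Sum>k\<in>A. f k)"
proof (cases "finite A")
  case True
  then show ?thesis by (induction A rule: finite_induct) (auto simp: zero_enat_def)
next
  case False
  then show ?thesis by (simp add: zero_enat_def)
qed

lemma sum_inf: "finite A \<Longrightarrow> k \<in> A \<Longrightarrow> f k = (\<infinity>::enat) \<Longrightarrow> sum f A = \<infinity>"
  by (simp add: sum.remove)

lemma mul_fin: "z = 0 \<or> e \<noteq> \<infinity> \<Longrightarrow> of_nat z * e = enat (z * the_enat e)"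
  by (cases e) (auto simp: of_nat_eq_enat zero_enat_def)

lemma mul_inf: "z > 0 \<Longrightarrow> of_nat z * (\<infinity>::enat) = \<infinity>"
  by (simp add: of_nat_eq_enat)

lemma sum_split_add: "(\<Sum>k<(m::nat)+d. f k) = (\<Sum>k<m. f k) + (\<Sum>i<d. f (m+i))"
  by (induction d) (auto simp: add.assoc)

definition emb :: "nat set \<Rightarrow> nat \<Rightarrow> nat list \<Rightarrow> enat list" where
  "emb J d x = map (\<lambda>j. if j \<in> J then \<infinity> else enat (x!j)) [0..<d]"

definition adm :: "nat \<Rightarrow> nat set \<Rightarrow> enat list \<Rightarrow> enat list list \<Rightarrow> nat set \<Rightarrow> bool" where
  "adm d J b0 bs K \<longleftrightarrow> K \<subseteq> {..<length bs} \<and>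
     (\<forall>j<d. j \<notin> J \<longrightarrow> b0!j \<noteq> \<infinity> \<and> (\<forall>k\<in>K. bs!k!j \<noteq> \<infinity>)) \<and>
     (\<forall>j<d. j \<in> J \<longrightarrow> b0!j = \<infinity> \<or> (\<exists>k\<in>K. bs!k!j = \<infinity>))"

definition baseK :: "nat \<Rightarrow> nat set \<Rightarrow> enat list \<Rightarrow> enat list list \<Rightarrow> nat set \<Rightarrow> nat list" where
  "baseK d J b0 bs K = map (\<lambda>j. if j \<in> J then 0 else
     the_enat (b0!j) + (\<Sum>k<length bs. if k \<in> K then the_enat (bs!k!j) else 0)) [0..<d]"

definition perK :: "nat \<Rightarrow> nat set \<Rightarrow> enat list list \<Rightarrow> nat set \<Rightarrow> nat list list" where
  "perK d J bs K = map (\<lambda>k. map (\<lambda>j. if j \<in> J \<or> k \<notin> K then 0 else the_enat (bs!k!j)) [0..<d]) [0..<length bs]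
     @ map (\<lambda>i. map (\<lambda>j. if j = i \<and> i \<in> J then 1 else 0) [0..<d]) [0..<d]"

lemma perK_len: "\<forall>b\<in>set (perK d J bs K). length b = d"
  by (auto simp: perK_def)

lemma perK_length: "length (perK d J bs K) = length bs + d"
  by (simp add: perK_def)

lemma perK_nth1: "k < length bs \<Longrightarrow> j < d \<Longrightarrow>
   perK d J bs K ! k ! j = (if j \<in> J \<or> k \<notin> K then 0 else the_enat (bs!k!j))"
  by (simp add: perK_def nth_append)

lemma perK_nth2: "i < d \<Longrightarrow> j < d \<Longrightarrow>
   perK d J bs K ! (length bs + i) ! j = (if j = i \<and> i \<in> J then 1 else 0)"
  by (simp add: perK_def nth_append)

lemma perK_sum:
  assumes "j < d"
  shows "(\<Sum>k<length bs + d. z k * perK d J bs K ! k ! j) =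
    (\<Sum>k<length bs. z k * (if j \<in> J \<or> k \<notin> K then 0 else the_enat (bs!k!j))) + (if j \<in> J then z (length bs + j) else 0)"
proof -
  have "(\<Sum>i<d. z (length bs + i) * perK d J bs K ! (length bs + i) ! j)
      = (\<Sum>i<d. if i = j then (if j \<in> J then z (length bs + j) else 0) else 0)"
    using assms by (intro sum.cong) (auto simp: perK_nth2)
  also have "\<dots> = (if j \<in> J then z (length bs + j) else 0)" using assms by simp
  finally show ?thesis
    unfolding sum_split_add using assms by (simp add: perK_nth1)
qed

lemma baseK_len: "length (baseK d J b0 bs K) = d" by (simp add: baseK_def)

lemma baseK_nth: "j < d \<Longrightarrow> baseK d J b0 bs K ! j = (if j \<in> J then 0 else
     the_enat (b0!j) + (\<Sum>k<length bs. if k \<in> K then the_enat (bs!k!j) else 0))"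
proof -
  assume j: "j < d"
  have e: "[0..<d]!j = j" using j by simp
  show ?thesis using j unfolding baseK_def by (simp only: nth_map length_upt e) (simp cong: if_cong)
qed

lemma emb_char:
  assumes lb0: "length b0 = d" and lbs: "\<forall>b\<in>set bs. length b = d" and lx: "length x = d"
  shows "(\<exists>K. adm d J b0 bs K \<and> x \<in> lin_set (baseK d J b0 bs K) (perK d J bs K))
     \<longleftrightarrow> emb J d x \<in> lin_set b0 bs"
proof
  assume "\<exists>K. adm d J b0 bs K \<and> x \<in> lin_set (baseK d J b0 bs K) (perK d J bs K)"
  then obtain K where adm: "adm d J b0 bs K" and xin: "x \<in> lin_set (baseK d J b0 bs K) (perK d J bs K)"
    by blast
  from xin obtain z' where z': "\<forall>j<d. x!j = baseK d J b0 bs K ! j + (\<Sum>k<length bs + d. z' k * perK d J bs K ! k ! j)"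
    unfolding lin_set_iff[OF baseK_len perK_len] perK_length by auto
  define z where "z k = (if k \<in> K then z' k + 1 else 0)" for k
  have Km: "K \<subseteq> {..<length bs}" using adm by (simp add: adm_def)
  have "\<forall>j<d. emb J d x ! j = b0!j + (\<Sum>k<length bs. of_nat (z k) * bs!k!j)"
  proof (intro allI impI)
    fix j assume j: "j < d"
    show "emb J d x ! j = b0!j + (\<Sum>k<length bs. of_nat (z k) * bs!k!j)"
    proof (cases "j \<in> J")
      case True
      then have "b0!j = \<infinity> \<or> (\<exists>k\<in>K. bs!k!j = \<infinity>)" using adm j by (simp add: adm_def)
      then have "b0!j + (\<Sum>k<length bs. of_nat (z k) * bs!k!j) = \<infinity>"
      proof
        assume "b0!j = \<infinity>" then show ?thesis by simp
      next
        assume "\<exists>k\<in>K. bs!k!j = \<infinity>"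
        then obtain k where k: "k \<in> K" "bs!k!j = \<infinity>" by blast
        have "(\<Sum>k<length bs. of_nat (z k) * bs!k!j) = \<infinity>"
          using k Km by (intro sum_inf[of _ k]) (auto simp: z_def mul_inf of_nat_eq_enat one_enat_def)
        then show ?thesis by simp
      qed
      then show ?thesis using True j by (simp add: emb_def)
    next
      case False
      have fin: "b0!j \<noteq> \<infinity>" "\<forall>k\<in>K. bs!k!j \<noteq> \<infinity>" using adm j False by (auto simp: adm_def)
      have "(\<Sum>k<length bs. of_nat (z k) * bs!k!j) = (\<Sum>k<length bs. enat (z k * the_enat (bs!k!j)))"
        using fin by (intro sum.cong refl mul_fin) (auto simp: z_def)
      also have "\<dots> = enat (\<Sum>k<length bs. z k * the_enat (bs!k!j))" by (rule enat_sum)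
      finally have R: "b0!j + (\<Sum>k<length bs. of_nat (z k) * bs!k!j) = enat (the_enat (b0!j) + (\<Sum>k<length bs. z k * the_enat (bs!k!j)))"
        using fin(1) by (cases "b0!j") auto
      have "x!j = the_enat (b0!j) + (\<Sum>k<length bs. if k \<in> K then the_enat (bs!k!j) else 0)
          + (\<Sum>k<length bs. z' k * (if k \<notin> K then 0 else the_enat (bs!k!j)))"
        using z'[rule_format, OF j] j False by (simp add: perK_sum baseK_nth)
      also have "\<dots> = the_enat (b0!j) + (\<Sum>k<length bs. z k * the_enat (bs!k!j))"
        unfolding add.assoc sum.distrib[symmetric]
        by (intro arg_cong2[where f="(+)"] refl sum.cong) (auto simp: z_def)
      finally show ?thesis using R j False by (simp add: emb_def)
    qed
  qed
  then show "emb J d x \<in> lin_set b0 bs"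
    unfolding lin_set_iff[OF lb0 lbs] by (auto simp: emb_def)
next
  assume "emb J d x \<in> lin_set b0 bs"
  then obtain z where z: "\<forall>j<d. emb J d x ! j = b0!j + (\<Sum>k<length bs. of_nat (z k) * bs!k!j)"
    unfolding lin_set_iff[OF lb0 lbs] by auto
  define K where "K = {k. k < length bs \<and> z k > 0}"
  define z' where "z' k = (if k < length bs then z k - 1 else x!(k - length bs))" for k
  have finpart: "b0!j \<noteq> \<infinity> \<and> (\<forall>k\<in>K. bs!k!j \<noteq> \<infinity>) \<and>
      x!j = the_enat (b0!j) + (\<Sum>k<length bs. z k * the_enat (bs!k!j))" if j: "j < d" "j \<notin> J" for j
  proof -
    have e: "enat (x!j) = b0!j + (\<Sum>k<length bs. of_nat (z k) * bs!k!j)"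
      using z[rule_format, OF j(1)] j by (simp add: emb_def)
    then have b0f: "b0!j \<noteq> \<infinity>" and sf: "(\<Sum>k<length bs. of_nat (z k) * bs!k!j) \<noteq> \<infinity>"
      by (metis enat.distinct(2) plus_eq_infty_iff_enat)+
    have kf: "\<forall>k\<in>K. bs!k!j \<noteq> \<infinity>"
    proof
      fix k assume k: "k \<in> K"
      show "bs!k!j \<noteq> \<infinity>"
      proof
        assume "bs!k!j = \<infinity>"
        then have "(\<Sum>k<length bs. of_nat (z k) * bs!k!j) = \<infinity>"
          using k by (intro sum_inf[of _ k]) (auto simp: K_def mul_inf)
        with sf show False by simp
      qed
    qed
    have "(\<Sum>k<length bs. of_nat (z k) * bs!k!j) = (\<Sum>k<length bs. enat (z k * the_enat (bs!k!j)))"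
      using kf by (intro sum.cong refl mul_fin) (auto simp: K_def)
    also have "\<dots> = enat (\<Sum>k<length bs. z k * the_enat (bs!k!j))" by (rule enat_sum)
    finally show ?thesis using e b0f kf by (cases "b0!j") auto
  qed
  have adm: "adm d J b0 bs K"
    unfolding adm_def
  proof (intro conjI allI impI)
    show "K \<subseteq> {..<length bs}" by (auto simp: K_def)
  next
    fix j assume "j < d" "j \<notin> J"
    then show "b0 ! j \<noteq> \<infinity>" "\<forall>k\<in>K. bs ! k ! j \<noteq> \<infinity>" using finpart by auto
  next
    fix j assume j: "j < d" "j \<in> J"
    show "b0 ! j = \<infinity> \<or> (\<exists>k\<in>K. bs ! k ! j = \<infinity>)"
    proof (rule ccontr)
      assume "\<not> ?thesis"
      then have fin: "b0!j \<noteq> \<infinity>" "\<forall>k\<in>K. bs!k!j \<noteq> \<infinity>" by auto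
      have "(\<Sum>k<length bs. of_nat (z k) * bs!k!j) = (\<Sum>k<length bs. enat (z k * the_enat (bs!k!j)))"
        using fin by (intro sum.cong refl mul_fin) (auto simp: K_def)
      also have "\<dots> = enat (\<Sum>k<length bs. z k * the_enat (bs!k!j))" by (rule enat_sum)
      finally have "b0!j + (\<Sum>k<length bs. of_nat (z k) * bs!k!j) \<noteq> \<infinity>" using fin by (cases "b0!j") auto
      moreover have "emb J d x ! j = \<infinity>" using j by (simp add: emb_def)
      ultimately show False using z j by simp
    qed
  qed
  have "\<forall>j<d. x!j = baseK d J b0 bs K ! j + (\<Sum>k<length bs + d. z' k * perK d J bs K ! k ! j)"
  proof (intro allI impI)
    fix j assume j: "j < d"
    show "x!j = baseK d J b0 bs K ! j + (\<Sum>k<length bs + d. z' k * perK d J bs K ! k ! j)"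
    proof (cases "j \<in> J")
      case True
      then show ?thesis using j by (simp add: perK_sum baseK_nth z'_def)
    next
      case False
      have "baseK d J b0 bs K ! j + (\<Sum>k<length bs + d. z' k * perK d J bs K ! k ! j)
        = the_enat (b0!j) + (\<Sum>k<length bs. if k \<in> K then the_enat (bs!k!j) else 0)
          + (\<Sum>k<length bs. z' k * (if k \<notin> K then 0 else the_enat (bs!k!j)))"
        using j False by (simp add: perK_sum baseK_nth)
      also have "\<dots> = the_enat (b0!j) + (\<Sum>k<length bs. z k * the_enat (bs!k!j))"
        unfolding add.assoc sum.distrib[symmetric]
        by (intro arg_cong2[where f="(+)"] refl sum.cong) (auto simp: K_def z'_def mult_eq_if)
      finally show ?thesis using finpart[OF j False] by simp
    qed
  qed
  then have "x \<in> lin_set (baseK d J b0 bs K) (perK d J bs K)"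
    unfolding lin_set_iff[OF baseK_len perK_len] perK_length using lx by auto
  with adm show "\<exists>K. adm d J b0 bs K \<and> x \<in> lin_set (baseK d J b0 bs K) (perK d J bs K)" by blast
qed

lemma semilinear_pre:
  assumes "semilinear d (C :: enat list set)"
  shows "\<exists>C'. semilinear d C' \<and> (\<forall>x. length x = d \<longrightarrow> (x \<in> C' \<longleftrightarrow> emb J d x \<in> C))"
proof -
  obtain P :: "(enat list \<times> enat list list) list" where
    P: "\<forall>(b0, bs)\<in>set P. length b0 = d \<and> (\<forall>b\<in>set bs. length b = d)"
    and C: "C = (\<Union>(b0, bs)\<in>set P. lin_set b0 bs)"
    using assms unfolding semilinear_def by blast
  define C' where "C' = (\<Union>p\<in>set P. \<Union>K\<in>{K. adm d J (fst p) (snd p) K}.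
      lin_set (baseK d J (fst p) (snd p) K) (perK d J (snd p) K))"
  have "semilinear d C'"
    unfolding C'_def
  proof (intro semilinear_UN)
    fix p K
    show "semilinear d (lin_set (baseK d J (fst p) (snd p) K) (perK d J (snd p) K))"
      by (intro semilinear_lin baseK_len perK_len)
  next
    fix p
    show "finite {K. adm d J (fst p) (snd p) K}"
      by (rule finite_subset[of _ "Pow {..<length (snd p)}"]) (auto simp: adm_def)
  qed simp
  moreover have "x \<in> C' \<longleftrightarrow> emb J d x \<in> C" if lx: "length x = d" for x
  proof -
    have "x \<in> C' \<longleftrightarrow> (\<exists>p\<in>set P. \<exists>K. adm d J (fst p) (snd p) K \<and>
        x \<in> lin_set (baseK d J (fst p) (snd p) K) (perK d J (snd p) K))"
      unfolding C'_def by blast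
    also have "\<dots> \<longleftrightarrow> (\<exists>p\<in>set P. emb J d x \<in> lin_set (fst p) (snd p))"
    proof (intro bex_cong refl)
      fix p assume "p \<in> set P"
      then have "length (fst p) = d" "\<forall>b\<in>set (snd p). length b = d" using P by auto
      from emb_char[OF this lx] show "(\<exists>K. adm d J (fst p) (snd p) K \<and>
        x \<in> lin_set (baseK d J (fst p) (snd p) K) (perK d J (snd p) K)) = (emb J d x \<in> lin_set (fst p) (snd p))" .
    qed
    also have "\<dots> \<longleftrightarrow> emb J d x \<in> C" unfolding C by (simp add: split_beta)
    finally show ?thesis .
  qed
  ultimately show ?thesis by blast
qed

definition gacc :: "'q \<Rightarrow> ('q \<times> 'a \<times> 'q) set \<Rightarrow> 'q set \<Rightarrow> 'a list \<Rightarrow> bool" where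
  "gacc q0 \<delta> F w \<longleftrightarrow> (\<exists>ps. length ps = length w + 1 \<and> ps ! 0 = q0 \<and>
     (\<forall>i < length w. (ps ! i, w ! i, ps ! (i+1)) \<in> \<delta>) \<and> ps ! length w \<in> F)"

lemma regular_gen:
  fixes Q :: "'q set" and \<delta> :: "('q \<times> 'a \<times> 'q) set"
  assumes Q: "finite Q" "q0 \<in> Q" "F \<subseteq> Q" "finite \<delta>" and wf: "\<forall>(p, a, q)\<in>\<delta>. p \<in> Q \<and> a \<in> \<Sigma> \<and> q \<in> Q"
  shows "regular \<Sigma> {w. gacc q0 \<delta> F w}"
proof -
  obtain f :: "'q \<Rightarrow> nat" and n where f: "f ` Q = {i. i < n}" "inj_on f Q"
    using finite_imp_inj_to_nat_seg[OF Q(1)] by blast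
  define g where "g = inv_into Q f"
  have gf: "g (f x) = x" if "x \<in> Q" for x using f(2) that by (simp add: g_def)
  define \<delta>' where "\<delta>' = (\<lambda>(p, a, q). (f p, a, f q)) ` \<delta>"
  have eq: "gacc q0 \<delta> F w \<longleftrightarrow> NFA_accepts (f q0) \<delta>' (f ` F) w" for w
  proof
    assume "gacc q0 \<delta> F w"
    then obtain ps where ps: "length ps = length w + 1" "ps ! 0 = q0"
      "\<forall>i < length w. (ps ! i, w ! i, ps ! (i+1)) \<in> \<delta>" "ps ! length w \<in> F"
      unfolding gacc_def by blast
    show "NFA_accepts (f q0) \<delta>' (f ` F) w"
      unfolding NFA_accepts_def
    proof (intro exI[of _ "map f ps"] conjI allI impI)
      fix i assume "i < length w"
      then show "(map f ps ! i, w ! i, map f ps ! (i + 1)) \<in> \<delta>'"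
        using ps unfolding \<delta>'_def by (auto intro!: image_eqI[of _ _ "(ps!i, w!i, ps!(i+1))"])
    qed (use ps in auto)
  next
    assume "NFA_accepts (f q0) \<delta>' (f ` F) w"
    then obtain ps where ps: "length ps = length w + 1" "ps ! 0 = f q0"
      "\<forall>i < length w. (ps ! i, w ! i, ps ! (i+1)) \<in> \<delta>'" "ps ! length w \<in> f ` F"
      unfolding NFA_accepts_def by blast
    show "gacc q0 \<delta> F w"
      unfolding gacc_def
    proof (intro exI[of _ "map g ps"] conjI allI impI)
      fix i assume i: "i < length w"
      then obtain p a q where pq: "(p, a, q) \<in> \<delta>" "f p = ps ! i" "a = w ! i" "f q = ps ! (i+1)"
        using ps(3) unfolding \<delta>'_def by fastforce
      have "p \<in> Q" "q \<in> Q" using wf pq(1) by auto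
      then show "(map g ps ! i, w ! i, map g ps ! (i + 1)) \<in> \<delta>"
        using pq i ps(1) gf by (metis Suc_eq_plus1 Suc_mono less_SucI nth_map)
    next
      show "map g ps ! 0 = q0" using ps gf Q(2) by simp
    next
      obtain r where "r \<in> F" "ps ! length w = f r" using ps(4) by blast
      then show "map g ps ! length w \<in> F" using ps(1) gf Q(3) by auto
    qed (use ps in auto)
  qed
  have "regular \<Sigma> {w. NFA_accepts (f q0) \<delta>' (f ` F) w}"
    unfolding regular_def
  proof (rule exI[of _ "f ` Q"], rule exI[of _ "f q0"], rule exI[of _ \<delta>'], rule exI[of _ "f ` F"], intro conjI)
    show "\<forall>(p, a, q)\<in>\<delta>'. p \<in> f ` Q \<and> a \<in> \<Sigma> \<and> q \<in> f ` Q"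
      using wf unfolding \<delta>'_def by auto
  qed (use Q \<delta>'_def in auto)
  then show ?thesis using eq by simp
qed

definition goodT :: "nat \<Rightarrow> nat set \<Rightarrow> nat list \<Rightarrow> bool" where
  "goodT d J v \<longleftrightarrow> (\<forall>j<d. j \<notin> J \<longrightarrow> v!j = 0)"

definition Vlang :: "(nat \<times> 'a \<times> nat list \<times> nat) set \<Rightarrow> nat set \<Rightarrow> nat \<Rightarrow> nat set \<Rightarrow> nat \<Rightarrow> 'a list set" where
  "Vlang \<Delta> F d J q = {w. \<exists>ps vs. length ps = length w + 1 \<and> length vs = length w \<and>
     ps!0 = q \<and> ps!length w = q \<and>
     (\<forall>i<length w. (ps!i, w!i, vs!i, ps!(i+1)) \<in> \<Delta> \<and> goodT d J (vs!i)) \<and>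
     (\<exists>t<length w. ps!t \<in> F) \<and> (\<forall>j\<in>J. \<exists>t<length w. vs!t!j \<noteq> 0)}"

definition newS :: "nat \<Rightarrow> nat set \<Rightarrow> nat \<Rightarrow> nat list \<Rightarrow> nat set" where
  "newS d F p v = {j. j < d \<and> v!j \<noteq> 0} \<union> (if p \<in> F then {d} else {})"

lemma newS_sub: "newS d F p v \<subseteq> {..d}" by (auto simp: newS_def)

definition dV :: "(nat \<times> 'a \<times> nat list \<times> nat) set \<Rightarrow> nat set \<Rightarrow> nat \<Rightarrow> nat set \<Rightarrow> ((nat \<times> nat set) \<times> 'a \<times> (nat \<times> nat set)) set" where
  "dV \<Delta> F d J = {((p, S), a, (p', S \<union> newS d F p v)) | p S a v p'. (p, a, v, p') \<in> \<Delta> \<and> goodT d J v \<and> S \<subseteq> {..d}}"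

lemma list_choice: "(\<And>i. i < n \<Longrightarrow> \<exists>x. P i x) \<Longrightarrow> \<exists>xs. length xs = n \<and> (\<forall>i<n. P i (xs!i))"
proof -
  assume h: "\<And>i. i < n \<Longrightarrow> \<exists>x. P i x"
  show ?thesis
    by (rule exI[of _ "map (\<lambda>i. SOME x. P i x) [0..<n]"]) (auto intro: someI_ex h)
qed

lemma Vlang_eq:
  assumes J: "J \<subseteq> {..<d}"
  shows "Vlang \<Delta> F d J q = {w. gacc (q, {}) (dV \<Delta> F d J) {(q, S) | S. S \<subseteq> {..d} \<and> insert d J \<subseteq> S} w}"
proof (intro set_eqI iffI; simp only: mem_Collect_eq)
  fix w assume "w \<in> Vlang \<Delta> F d J q"
  then obtain ps vs where ps: "length ps = length w + 1" "length vs = length w"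
     "ps!0 = q" "ps!length w = q"
     "\<forall>i<length w. (ps!i, w!i, vs!i, ps!(i+1)) \<in> \<Delta> \<and> goodT d J (vs!i)"
     "\<exists>t<length w. ps!t \<in> F" "\<forall>j\<in>J. \<exists>t<length w. vs!t!j \<noteq> 0"
    unfolding Vlang_def by blast
  define Sx where "Sx i = (\<Union>t<i. newS d F (ps!t) (vs!t))" for i
  have Sx_sub: "Sx i \<subseteq> {..d}" for i using newS_sub unfolding Sx_def by blast
  have Sx_Suc: "Sx (Suc i) = Sx i \<union> newS d F (ps!i) (vs!i)" for i
    unfolding Sx_def by (auto simp: lessThan_Suc)
  show "gacc (q, {}) (dV \<Delta> F d J) {(q, S) | S. S \<subseteq> {..d} \<and> insert d J \<subseteq> S} w"
    unfolding gacc_def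
  proof (intro exI[of _ "map (\<lambda>i. (ps!i, Sx i)) [0..<length w + 1]"] conjI allI impI)
    fix i assume i: "i < length w"
    have "((ps!i, Sx i), w!i, (ps!(i+1), Sx i \<union> newS d F (ps!i) (vs!i))) \<in> dV \<Delta> F d J"
      unfolding dV_def using ps(5) i Sx_sub by blast
    then show "(map (\<lambda>i. (ps!i, Sx i)) [0..<length w + 1] ! i, w ! i,
          map (\<lambda>i. (ps!i, Sx i)) [0..<length w + 1] ! (i + 1)) \<in> dV \<Delta> F d J"
      using i Sx_Suc by (simp del: upt_Suc add: nth_append)
  next
    have "d \<in> Sx (length w)"
      using ps(6) unfolding Sx_def newS_def by auto
    moreover have "J \<subseteq> Sx (length w)"
    proof
      fix j assume "j \<in> J"
      then obtain t where "t < length w" "vs!t!j \<noteq> 0" "j < d" using ps(7) J by blast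
      then show "j \<in> Sx (length w)" unfolding Sx_def newS_def by auto
    qed
    ultimately show "map (\<lambda>i. (ps!i, Sx i)) [0..<length w + 1] ! length w
        \<in> {(q, S) | S. S \<subseteq> {..d} \<and> insert d J \<subseteq> S}"
      using ps(4) Sx_sub by (simp del: upt_Suc add: nth_append)
  qed (use ps in \<open>auto simp: Sx_def simp del: upt_Suc\<close>)
next
  fix w assume "gacc (q, {}) (dV \<Delta> F d J) {(q, S) | S. S \<subseteq> {..d} \<and> insert d J \<subseteq> S} w"
  then obtain ps' where ps': "length ps' = length w + 1" "ps' ! 0 = (q, {})"
     "\<forall>i < length w. (ps' ! i, w ! i, ps' ! (i+1)) \<in> dV \<Delta> F d J"
     "ps' ! length w \<in> {(q, S) | S. S \<subseteq> {..d} \<and> insert d J \<subseteq> S}"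
    unfolding gacc_def by blast
  have "\<exists>v. (fst (ps'!i), w!i, v, fst (ps'!(i+1))) \<in> \<Delta> \<and> goodT d J v \<and>
     snd (ps'!(i+1)) = snd (ps'!i) \<union> newS d F (fst (ps'!i)) v" if "i < length w" for i
    using ps'(3) that unfolding dV_def by fastforce
  then obtain vs where vs: "length vs = length w"
    "\<forall>i<length w. (fst (ps'!i), w!i, vs!i, fst (ps'!(i+1))) \<in> \<Delta> \<and> goodT d J (vs!i) \<and>
     snd (ps'!(i+1)) = snd (ps'!i) \<union> newS d F (fst (ps'!i)) (vs!i)"
    using list_choice[of "length w" "\<lambda>i v. (fst (ps'!i), w!i, v, fst (ps'!(i+1))) \<in> \<Delta> \<and> goodT d J v \<and>
     snd (ps'!(i+1)) = snd (ps'!i) \<union> newS d F (fst (ps'!i)) v"] by blast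
  have S: "snd (ps'!i) = (\<Union>t<i. newS d F (fst (ps'!t)) (vs!t))" if "i \<le> length w" for i
    using that
  proof (induction i)
    case 0 then show ?case using ps'(2) by simp
  next
    case (Suc i)
    then show ?case using vs(2) by (auto simp: lessThan_Suc)
  qed
  obtain Sf where Sf: "ps' ! length w = (q, Sf)" "insert d J \<subseteq> Sf" using ps'(4) by blast
  have Sf': "Sf = (\<Union>t<length w. newS d F (fst (ps'!t)) (vs!t))" using S[of "length w"] Sf by simp
  show "w \<in> Vlang \<Delta> F d J q"
    unfolding Vlang_def
  proof (intro CollectI exI[of _ "map fst ps'"] exI[of _ vs] conjI allI impI)
    show "\<exists>t<length w. map fst ps' ! t \<in> F"
    proof -
      from Sf Sf' obtain t where "t < length w" "d \<in> newS d F (fst (ps'!t)) (vs!t)" by blast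
      then show ?thesis using ps'(1) by (auto simp: newS_def split: if_splits)
    qed
  next
    show "\<forall>j\<in>J. \<exists>t<length w. vs ! t ! j \<noteq> 0"
    proof
      fix j assume j: "j \<in> J"
      with Sf Sf' obtain t where "t < length w" "j \<in> newS d F (fst (ps'!t)) (vs!t)" by blast
      then show "\<exists>t<length w. vs ! t ! j \<noteq> 0" using j J by (auto simp: newS_def split: if_splits)
    qed
  qed (use ps' vs Sf in auto)
qed

lemma Vlang_regular:
  assumes wf: "PA_wf \<Sigma> d Q q0 \<Delta> F" and J: "J \<subseteq> {..<d}" and q: "q \<in> Q"
  shows "regular \<Sigma> (Vlang \<Delta> F d J q)"
proof -
  have fin: "finite Q" "finite \<Delta>" "F \<subseteq> Q" and wfD: "\<forall>(p, a, v, q) \<in> \<Delta>. p \<in> Q \<and> a \<in> \<Sigma> \<and> length v = d \<and> q \<in> Q"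
    using wf by (auto simp: PA_wf_def)
  have "dV \<Delta> F d J \<subseteq> (\<lambda>((p, a, v, p'), S). ((p, S), a, (p', S \<union> newS d F p v))) ` (\<Delta> \<times> Pow {..d})"
    unfolding dV_def by (auto intro!: image_eqI)
  then have "finite (dV \<Delta> F d J)" by (rule finite_subset) (use fin in auto)
  moreover have "\<forall>(p, a, q)\<in>dV \<Delta> F d J. p \<in> Q \<times> Pow {..d} \<and> a \<in> \<Sigma> \<and> q \<in> Q \<times> Pow {..d}"
    using wfD newS_sub unfolding dV_def by fastforce
  ultimately have "regular \<Sigma> {w. gacc (q, {}) (dV \<Delta> F d J) {(q, S) | S. S \<subseteq> {..d} \<and> insert d J \<subseteq> S} w}"
    using fin q by (intro regular_gen) auto
  then show ?thesis unfolding Vlang_eq[OF J] .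
qed

lemma blocks_ex:
  fixes len :: "nat \<Rightarrow> nat"
  assumes pos: "\<forall>i. len i > 0"
  shows "\<exists>i k. n = (\<Sum>j<i. len j) + k \<and> k < len i"
proof (induction n)
  case 0
  show ?case using pos by (intro exI[of _ 0]) auto
next
  case (Suc n)
  then obtain i k where ik: "n = (\<Sum>j<i. len j) + k" "k < len i" by blast
  show ?case
  proof (cases "Suc k < len i")
    case True
    then show ?thesis using ik by (intro exI[of _ i] exI[of _ "Suc k"]) auto
  next
    case False
    then have "Suc n = (\<Sum>j<Suc i. len j) + 0" using ik by auto
    then show ?thesis using pos by blast
  qed
qed

lemma pos_mono:
  fixes len :: "nat \<Rightarrow> nat"
  shows "i \<le> i' \<Longrightarrow> (\<Sum>j<i. len j) \<le> (\<Sum>j<i'. len j)"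
  by (rule sum_mono2) auto

lemma blocks_uniq:
  fixes len :: "nat \<Rightarrow> nat"
  assumes "(\<Sum>j<i. len j) + k = (\<Sum>j<i'. len j) + k'" "k < len i" "k' < len i'"
  shows "i = i' \<and> k = k'"
proof -
  have "\<not> i < i'" if "(\<Sum>j<i. len j) + k = (\<Sum>j<i'. len j) + k'" "k < len i" for i i' k k'
  proof
    assume "i < i'"
    then have "(\<Sum>j<Suc i. len j) \<le> (\<Sum>j<i'. len j)" by (intro pos_mono) auto
    then show False using that by simp
  qed
  then have "i = i'" using assms by (metis linorder_neqE_nat)
  then show ?thesis using assms by simp
qed

lemma pos_ge:
  fixes len :: "nat \<Rightarrow> nat"
  assumes "\<forall>i. len i > 0"
  shows "i \<le> (\<Sum>j<i. len j)"
proof -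
  have "(\<Sum>j<i. 1) \<le> (\<Sum>j<i. len j)" using assms by (intro sum_mono) (auto simp: Suc_le_eq)
  then show ?thesis by simp
qed

lemma omega_run:
  assumes "\<beta> \<in> omega_pow (Vlang \<Delta> F d J q)"
  shows "\<exists>Pb Vb. Pb 0 = q \<and> (\<forall>n. (Pb n, \<beta> n, Vb n, Pb (Suc n)) \<in> \<Delta> \<and> goodT d J (Vb n)) \<and>
     (\<forall>N. \<exists>n\<ge>N. Pb n \<in> F) \<and> (\<forall>j\<in>J. \<forall>N. \<exists>n\<ge>N. Vb n ! j \<noteq> 0)"
proof -
  from assms have "\<exists>ws. (\<forall>i::nat. ws i \<in> Vlang \<Delta> F d J q \<and> ws i \<noteq> []) \<and>
    (\<forall>i k. k < length (ws i) \<longrightarrow> \<beta> ((\<Sum>j<i. length (ws j)) + k) = ws i ! k)"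
    unfolding omega_pow_def by (simp only: mem_Collect_eq)
  then obtain ws where ws0: "(\<forall>i::nat. ws i \<in> Vlang \<Delta> F d J q \<and> ws i \<noteq> []) \<and>
    (\<forall>i k. k < length (ws i) \<longrightarrow> \<beta> ((\<Sum>j<i. length (ws j)) + k) = ws i ! k)" ..
  have ws: "\<forall>i::nat. ws i \<in> Vlang \<Delta> F d J q \<and> ws i \<noteq> []"
    "\<forall>i k. k < length (ws i) \<longrightarrow> \<beta> ((\<Sum>j<i. length (ws j)) + k) = ws i ! k"
    using ws0 by (rule conjunct1, rule conjunct2)
  define len where "len i = length (ws i)" for i
  define pos where "pos i = (\<Sum>j<i. len j)" for i
  have lenp: "\<forall>i. len i > 0" using ws(1) by (auto simp: len_def)
  have "\<forall>i. \<exists>pv. length (fst pv) = len i + 1 \<and> length (snd pv) = len i \<and>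
     fst pv!0 = q \<and> fst pv!len i = q \<and>
     (\<forall>k<len i. (fst pv!k, ws i!k, snd pv!k, fst pv!(k+1)) \<in> \<Delta> \<and> goodT d J (snd pv!k)) \<and>
     (\<exists>t<len i. fst pv!t \<in> F) \<and> (\<forall>j\<in>J. \<exists>t<len i. snd pv!t!j \<noteq> 0)"
  proof
    fix i
    from ws(1) have "ws i \<in> Vlang \<Delta> F d J q" by blast
    then obtain ps vs where "length ps = len i + 1 \<and> length vs = len i \<and>
     ps!0 = q \<and> ps!len i = q \<and>
     (\<forall>k<len i. (ps!k, ws i!k, vs!k, ps!(k+1)) \<in> \<Delta> \<and> goodT d J (vs!k)) \<and>
     (\<exists>t<len i. ps!t \<in> F) \<and> (\<forall>j\<in>J. \<exists>t<len i. vs!t!j \<noteq> 0)"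
      unfolding Vlang_def len_def by blast
    then show "\<exists>pv. length (fst pv) = len i + 1 \<and> length (snd pv) = len i \<and>
     fst pv!0 = q \<and> fst pv!len i = q \<and>
     (\<forall>k<len i. (fst pv!k, ws i!k, snd pv!k, fst pv!(k+1)) \<in> \<Delta> \<and> goodT d J (snd pv!k)) \<and>
     (\<exists>t<len i. fst pv!t \<in> F) \<and> (\<forall>j\<in>J. \<exists>t<len i. snd pv!t!j \<noteq> 0)"
      by (intro exI[of _ "(ps, vs)"]) simp
  qed
  then obtain f where f: "\<forall>i. length (fst (f i)) = len i + 1 \<and> length (snd (f i)) = len i \<and>
     fst (f i)!0 = q \<and> fst (f i)!len i = q \<and>
     (\<forall>k<len i. (fst (f i)!k, ws i!k, snd (f i)!k, fst (f i)!(k+1)) \<in> \<Delta> \<and> goodT d J (snd (f i)!k)) \<and>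
     (\<exists>t<len i. fst (f i)!t \<in> F) \<and> (\<forall>j\<in>J. \<exists>t<len i. snd (f i)!t!j \<noteq> 0)"
    by (rule choice[THEN exE]) blast
  define pss where "pss i = fst (f i)" for i
  define vss where "vss i = snd (f i)" for i
  have "\<forall>n. \<exists>ik. n = pos (fst ik) + snd ik \<and> snd ik < len (fst ik)"
    using blocks_ex[OF lenp] unfolding pos_def by fastforce
  then obtain b where b: "\<forall>n. n = pos (fst (b n)) + snd (b n) \<and> snd (b n) < len (fst (b n))"
    by (rule choice[THEN exE]) blast
  have b_at: "b (pos i + k) = (i, k)" if "k < len i" for i k
  proof -
    have e: "pos (fst (b (pos i + k))) + snd (b (pos i + k)) = pos i + k"
      "snd (b (pos i + k)) < len (fst (b (pos i + k)))" using b by (metis (no_types))+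
    have "fst (b (pos i + k)) = i \<and> snd (b (pos i + k)) = k"
      using blocks_uniq[OF e(1)[unfolded pos_def] e(2)[unfolded pos_def] that] unfolding pos_def .
    then show ?thesis by (simp add: prod_eq_iff)
  qed
  define Pb where "Pb n = pss (fst (b n)) ! snd (b n)" for n
  define Vb where "Vb n = vss (fst (b n)) ! snd (b n)" for n
  have Pb_at: "Pb (pos i + k) = pss i ! k" if "k \<le> len i" for i k
  proof (cases "k < len i")
    case True
    then show ?thesis using b_at by (simp add: Pb_def)
  next
    case False
    then have k: "k = len i" using that by simp
    have "pos i + k = pos (Suc i) + 0" using k by (simp add: pos_def)
    then have "Pb (pos i + k) = pss (Suc i) ! 0" using b_at[of 0 "Suc i"] lenp by (simp add: Pb_def)
    then show ?thesis using f k by (simp add: pss_def)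
  qed
  have Vb_at: "Vb (pos i + k) = vss i ! k" if "k < len i" for i k
    using b_at that by (simp add: Vb_def)
  have beta_at: "\<beta> (pos i + k) = ws i ! k" if "k < len i" for i k
    using ws(2) that by (simp add: pos_def len_def)
  show ?thesis
  proof (intro exI[of _ Pb] exI[of _ Vb] conjI allI ballI)
    show "Pb 0 = q" using Pb_at[of 0 0] f by (simp add: pos_def pss_def)
  next
    fix n
    define i where "i = fst (b n)"
    define k where "k = snd (b n)"
    have ik: "n = pos i + k" "k < len i" using b unfolding i_def k_def by blast+
    have tr: "(pss i!k, ws i!k, vss i!k, pss i!(k+1)) \<in> \<Delta> \<and> goodT d J (vss i!k)"
      using f ik(2) unfolding pss_def vss_def by blast
    have sn: "Suc n = pos i + (k+1)" using ik by simp
    have e1: "Pb n = pss i ! k" using Pb_at[of k i] ik by simp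
    have e2: "Pb (Suc n) = pss i ! (k+1)" using Pb_at[of "k+1" i] ik sn by simp
    have e3: "Vb n = vss i ! k" using Vb_at[of k i] ik by simp
    have e4: "\<beta> n = ws i ! k" using beta_at[of k i] ik by simp
    show "(Pb n, \<beta> n, Vb n, Pb (Suc n)) \<in> \<Delta>" "goodT d J (Vb n)"
      using tr unfolding e1 e2 e3 e4 by blast+
  next
    fix N
    have "\<exists>t<len N. pss N ! t \<in> F" using f unfolding pss_def by blast
    then obtain t where t: "t < len N" "pss N ! t \<in> F" by blast
    have "N \<le> pos N" using pos_ge[OF lenp] by (simp add: pos_def)
    then show "\<exists>n\<ge>N. Pb n \<in> F" using t Pb_at[of t N] by (intro exI[of _ "pos N + t"]) auto
  next
    fix j N assume j: "j \<in> J"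
    have "\<exists>t<len N. vss N ! t ! j \<noteq> 0" using f j unfolding vss_def by blast
    then obtain t where t: "t < len N" "vss N ! t ! j \<noteq> 0" by blast
    have "N \<le> pos N" using pos_ge[OF lenp] by (simp add: pos_def)
    then show "\<exists>n\<ge>N. Vb n ! j \<noteq> 0" using t Vb_at[of t N] by (intro exI[of _ "pos N + t"]) auto
  qed
qed

lemma wf_len: "PA_wf \<Sigma> d Q q0 \<Delta> F \<Longrightarrow> (p, a, v, p') \<in> \<Delta> \<Longrightarrow> length v = d"
  unfolding PA_wf_def by fast

lemma sound:
  assumes wf: "PA_wf \<Sigma> d Q q0 \<Delta> F" and J: "J \<subseteq> {..<d}"
    and Cp: "\<forall>x. length x = d \<longrightarrow> (x \<in> C' \<longleftrightarrow> emb J d x \<in> C)"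
    and u: "PA_accepts d q0 \<Delta> {q} C' u" and \<beta>: "\<beta> \<in> omega_pow (Vlang \<Delta> F d J q)"
  shows "LPBA_accepts d q0 \<Delta> F C (conc u \<beta>)"
proof -
  obtain ps vs where ps: "length ps = length u + 1" "length vs = length u"
     "ps ! 0 = q0" "\<forall>i < length u. (ps ! i, u ! i, vs ! i, ps ! (i+1)) \<in> \<Delta>"
     "ps ! length u \<in> {q}" "vsum d vs \<in> C'"
    using u unfolding PA_accepts_def by blast
  obtain Pb Vb where Pb: "Pb 0 = q" "\<forall>n. (Pb n, \<beta> n, Vb n, Pb (Suc n)) \<in> \<Delta> \<and> goodT d J (Vb n)"
     "\<forall>N. \<exists>n\<ge>N. Pb n \<in> F" "\<forall>j\<in>J. \<forall>N. \<exists>n\<ge>N. Vb n ! j \<noteq> 0"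
    using omega_run[OF \<beta>] by blast
  define m where "m = length u"
  define P where "P n = (if n < m then ps ! n else Pb (n - m))" for n
  define V where "V n = (if n < m then vs ! n else Vb (n - m))" for n
  have psm: "ps ! m = q" using ps(5) by (simp add: m_def)
  have lvs: "\<forall>v\<in>set vs. length v = d"
  proof
    fix v assume "v \<in> set vs"
    then obtain i where "i < length u" "v = vs ! i" using ps(2) by (metis in_set_conv_nth)
    then show "length v = d" using ps(4) wf_len[OF wf] by blast
  qed
  have P0: "P 0 = q0"
    using ps(3) Pb(1) psm by (cases "m = 0") (auto simp: P_def)
  have trans: "(P i, conc u \<beta> i, V i, P (Suc i)) \<in> \<Delta>" for i
  proof (cases "i < m")
    case True
    have "P (Suc i) = ps ! (Suc i)"
    proof (cases "Suc i < m")
      case True2: True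
      then show ?thesis by (simp add: P_def)
    next
      case False
      then have "Suc i = m" using True by simp
      then show ?thesis using Pb(1) psm by (simp add: P_def)
    qed
    then show ?thesis using True ps(4) by (simp add: P_def V_def conc_def m_def)
  next
    case False
    then have "Suc i - m = Suc (i - m)" by simp
    then show ?thesis using False Pb(2) by (simp add: P_def V_def conc_def m_def)
  qed
  have infF: "infinite {i. P i \<in> F}"
    unfolding infinite_nat_iff_unbounded_le
  proof
    fix N
    obtain n where "n \<ge> N" "Pb n \<in> F" using Pb(3) by blast
    then show "\<exists>n'\<ge>N. n' \<in> {i. P i \<in> F}" by (intro exI[of _ "m + n"]) (auto simp: P_def)
  qed
  have rho: "rho d V = emb J d (vsum d vs)"
  proof (rule nth_equalityI)
    show "length (rho d V) = length (emb J d (vsum d vs))" by (simp add: rho_def emb_def)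
  next
    fix j assume "j < length (rho d V)"
    then have j: "j < d" by (simp add: rho_def)
    show "rho d V ! j = emb J d (vsum d vs) ! j"
    proof (cases "j \<in> J")
      case True
      have "infinite {i. V i ! j \<noteq> 0}"
        unfolding infinite_nat_iff_unbounded_le
      proof
        fix N
        obtain n where "n \<ge> N" "Vb n ! j \<noteq> 0" using Pb(4) True by blast
        then show "\<exists>n'\<ge>N. n' \<in> {i. V i ! j \<noteq> 0}" by (intro exI[of _ "m + n"]) (auto simp: V_def)
      qed
      then show ?thesis using True j by (simp add: rho_def emb_def)
    next
      case False
      have sub: "{i. V i ! j \<noteq> 0} \<subseteq> {..<m}"
      proof
        fix i assume i: "i \<in> {i. V i ! j \<noteq> 0}"
        show "i \<in> {..<m}"
        proof (rule ccontr)
          assume "i \<notin> {..<m}"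
          then have "V i = Vb (i - m)" by (simp add: V_def)
          then have "V i ! j = 0" using Pb(2) False j unfolding goodT_def by metis
          then show False using i by simp
        qed
      qed
      then have fin: "finite {i. V i ! j \<noteq> 0}" by (rule finite_subset) simp
      have "(\<Sum>i\<in>{i. V i ! j \<noteq> 0}. V i ! j) = (\<Sum>i<m. V i ! j)"
        by (rule sum.mono_neutral_left) (use sub in auto)
      also have "\<dots> = (\<Sum>i<length vs. vs ! i ! j)" by (simp add: V_def m_def ps(2))
      also have "\<dots> = vsum d vs ! j" using vsum_nth[OF lvs] j by simp
      finally show ?thesis using fin False j by (simp add: rho_def emb_def)
    qed
  qed
  have "rho d V \<in> C" unfolding rho using Cp ps(6) vsum_nth[OF lvs] by blast
  then show ?thesis unfolding LPBA_accepts_def using P0 trans infF by blast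
qed

lemma telescope:
  fixes s :: "nat \<Rightarrow> nat"
  assumes "\<forall>n. s n < s (Suc n)"
  shows "(\<Sum>j<n. s (Suc j) - s j) = s n - s 0 \<and> s 0 \<le> s n"
proof (induction n)
  case 0 then show ?case by simp
next
  case (Suc n)
  then show ?case using assms[rule_format, of n] by simp
qed

lemma complete:
  assumes wf: "PA_wf \<Sigma> d Q q0 \<Delta> F" and acc: "LPBA_accepts d q0 \<Delta> F C \<alpha>"
  shows "\<exists>J q. J \<subseteq> {..<d} \<and> q \<in> Q \<and> (\<exists>u \<beta>. \<alpha> = conc u \<beta> \<and>
     (\<forall>C'. (\<forall>x. length x = d \<longrightarrow> (x \<in> C' \<longleftrightarrow> emb J d x \<in> C)) \<longrightarrow> PA_accepts d q0 \<Delta> {q} C' u) \<and>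
     \<beta> \<in> omega_pow (Vlang \<Delta> F d J q))"
proof -
  obtain p v where pv: "p 0 = q0" "\<forall>i. (p i, \<alpha> i, v i, p (Suc i)) \<in> \<Delta>"
     "infinite {i. p i \<in> F}" "rho d v \<in> C"
    using acc unfolding LPBA_accepts_def by blast
  have wfD: "finite Q" "q0 \<in> Q" "\<forall>(p, a, v, q) \<in> \<Delta>. p \<in> Q \<and> length v = d \<and> q \<in> Q"
    using wf unfolding PA_wf_def by auto
  have pQ: "p i \<in> Q" for i
  proof (induction i)
    case 0 then show ?case using pv(1) wfD(2) by simp
  next
    case (Suc i) then show ?case using pv(2)[rule_format, of i] wfD(3) by blast
  qed
  have lv: "length (v i) = d" for i using pv(2)[rule_format, of i] wfD(3) by blast
  define J where "J = {j. j < d \<and> infinite {i. v i ! j \<noteq> 0}}"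
  have Jd: "J \<subseteq> {..<d}" by (auto simp: J_def)
  have finJ: "finite J" using Jd finite_subset by blast
  have "finite (\<Union>j\<in>{j. j < d \<and> j \<notin> J}. {i. v i ! j \<noteq> 0})"
    by (auto simp: J_def)
  then obtain N where N: "(\<Union>j\<in>{j. j < d \<and> j \<notin> J}. {i. v i ! j \<noteq> 0}) \<subseteq> {..<N}"
    using finite_nat_bounded by blast
  have goodN: "goodT d J (v i)" if "N \<le> i" for i
    unfolding goodT_def using N that by fastforce
  have "\<exists>q\<in>Q. infinite {i. p i = q}"
  proof (rule ccontr)
    assume "\<not> ?thesis"
    then have "finite (\<Union>q\<in>Q. {i. p i = q})" using wfD(1) by auto
    moreover have "(\<Union>q\<in>Q. {i. p i = q}) = UNIV" using pQ by auto
    ultimately show False by simp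
  qed
  then obtain q where q: "q \<in> Q" "infinite {i. p i = q}" by blast
  have qex: "\<exists>i\<ge>M. p i = q" for M using q(2) unfolding infinite_nat_iff_unbounded_le by blast
  define s0 where "s0 = (LEAST i. N \<le> i \<and> p i = q)"
  have s0: "N \<le> s0" "p s0 = q"
    using LeastI_ex[of "\<lambda>i. N \<le> i \<and> p i = q"] qex[of N] unfolding s0_def by auto
  define good where "good x i \<longleftrightarrow> x < i \<and> p i = q \<and> (\<exists>t. x \<le> t \<and> t < i \<and> p t \<in> F) \<and>
     (\<forall>j\<in>J. \<exists>t. x \<le> t \<and> t < i \<and> v t ! j \<noteq> 0)" for x i
  have goodex: "\<exists>i. good x i" for x
  proof -
    obtain tF where tF: "tF \<ge> x" "p tF \<in> F" using pv(3) unfolding infinite_nat_iff_unbounded_le by blast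
    have "\<forall>j\<in>J. \<exists>t. t \<ge> x \<and> v t ! j \<noteq> 0"
      using J_def unfolding infinite_nat_iff_unbounded_le by blast
    then obtain tj where tj: "\<forall>j\<in>J. tj j \<ge> x \<and> v (tj j) ! j \<noteq> 0" by metis
    define M where "M = Suc (tF + (\<Sum>j\<in>J. tj j))"
    obtain i where i: "i \<ge> M" "p i = q" using qex by blast
    have "tj j < i" if "j \<in> J" for j
      using member_le_sum[of j J tj, OF that _ finJ] i(1) unfolding M_def by simp
    then have "good x i" unfolding good_def using tF tj i M_def by fastforce
    then show ?thesis by blast
  qed
  define nx where "nx x = (SOME i. good x i)" for x
  have nx: "good x (nx x)" for x unfolding nx_def using goodex by (rule someI_ex)
  define s where "s n = (nx ^^ n) s0" for n
  have sS: "s (Suc n) = nx (s n)" for n by (simp add: s_def)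
  have sgood: "good (s n) (s (Suc n))" for n using nx sS by simp
  have smono: "\<forall>n. s n < s (Suc n)" using sgood good_def by blast
  have sq: "p (s n) = q" for n
    using s0 sgood[of "n - 1"] good_def by (cases n) (auto simp: s_def)
  have sN: "N \<le> s n" for n
    using telescope[OF smono, of n] s0 by (simp add: s_def)
  define u where "u = map \<alpha> [0..<s0]"
  define \<beta> where "\<beta> n = \<alpha> (s0 + n)" for n
  define ws where "ws n = map \<alpha> [s n..<s (Suc n)]" for n
  have conc: "\<alpha> = conc u \<beta>" by (rule ext) (simp add: conc_def u_def \<beta>_def)
  have U: "PA_accepts d q0 \<Delta> {q} C' u" if Cp: "\<forall>x. length x = d \<longrightarrow> (x \<in> C' \<longleftrightarrow> emb J d x \<in> C)" for C'
  proof -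
    define vs where "vs = map v [0..<s0]"
    have lvs: "\<forall>x\<in>set vs. length x = d" using lv by (auto simp: vs_def)
    have "emb J d (vsum d vs) = rho d v"
    proof (rule nth_equalityI)
      show "length (emb J d (vsum d vs)) = length (rho d v)" by (simp add: rho_def emb_def)
    next
      fix j assume "j < length (emb J d (vsum d vs))"
      then have j: "j < d" by (simp add: emb_def)
      show "emb J d (vsum d vs) ! j = rho d v ! j"
      proof (cases "j \<in> J")
        case True then show ?thesis using j by (simp add: emb_def rho_def J_def)
      next
        case False
        have fin: "finite {i. v i ! j \<noteq> 0}" using False j by (simp add: J_def)
        have sub: "{i. v i ! j \<noteq> 0} \<subseteq> {..<s0}" using N False j s0(1) by fastforce
        have "(\<Sum>i\<in>{i. v i ! j \<noteq> 0}. v i ! j) = (\<Sum>i<s0. v i ! j)"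
          by (rule sum.mono_neutral_left) (use sub in auto)
        also have "\<dots> = vsum d vs ! j" using vsum_nth[OF lvs] j by (simp add: vs_def)
        finally show ?thesis using fin False j by (simp add: rho_def emb_def)
      qed
    qed
    then have "vsum d vs \<in> C'" using Cp vsum_nth[OF lvs] pv(4) by metis
    then show ?thesis
      unfolding PA_accepts_def
      by (intro exI[of _ "map p [0..<s0+1]"] exI[of _ vs])
         (auto simp: u_def vs_def pv(1) pv(2) s0(2) nth_append simp del: upt_Suc)
  qed
  have "\<beta> \<in> omega_pow (Vlang \<Delta> F d J q)"
    unfolding omega_pow_def
  proof (intro CollectI exI[of _ ws] conjI allI impI)
    fix i
    have lt: "s i < s (Suc i)" using smono by blast
    then show "ws i \<noteq> []" by (simp add: ws_def)
    define a where "a = s i"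
    define l where "l = s (Suc i) - s i"
    have sSi: "s (Suc i) = a + l" using lt by (simp add: a_def l_def)
    have lws: "length (ws i) = l" by (simp add: ws_def l_def)
    have wsk: "ws i ! k = \<alpha> (a + k)" if "k < l" for k using that lt by (simp add: ws_def a_def l_def)
    have g: "good a (a + l)" using sgood[of i] sSi by (simp add: a_def)
    show "ws i \<in> Vlang \<Delta> F d J q"
      unfolding Vlang_def
    proof (intro CollectI exI[of _ "map (\<lambda>k. p (a + k)) [0..<l+1]"] exI[of _ "map (\<lambda>k. v (a + k)) [0..<l]"] conjI allI impI)
      fix k assume k: "k < length (ws i)"
      show "(map (\<lambda>k. p (a + k)) [0..<l+1] ! k, ws i ! k, map (\<lambda>k. v (a + k)) [0..<l] ! k,
           map (\<lambda>k. p (a + k)) [0..<l+1] ! (k + 1)) \<in> \<Delta>"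
        using k lws wsk pv(2) by (simp del: upt_Suc add: nth_append)
      show "goodT d J (map (\<lambda>k. v (a + k)) [0..<l] ! k)"
        using k lws goodN sN[of i] by (simp add: a_def)
    next
      obtain t where t: "a \<le> t" "t < a + l" "p t \<in> F" using g good_def by blast
      then have "t - a < l" "[0..<l + 1] ! (t - a) = t - a" by (auto simp del: upt_Suc)
      then show "\<exists>t<length (ws i). map (\<lambda>k. p (a + k)) [0..<l + 1] ! t \<in> F"
        using lws t by (intro exI[of _ "t - a"]) (simp del: upt_Suc)
    next
      show "\<forall>j\<in>J. \<exists>t<length (ws i). map (\<lambda>k. v (a + k)) [0..<l] ! t ! j \<noteq> 0"
      proof
        fix j assume "j \<in> J"
        then obtain t where t: "a \<le> t" "t < a + l" "v t ! j \<noteq> 0" using g good_def by blast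
        then have "t - a < l" "[0..<l] ! (t - a) = t - a" by auto
        then show "\<exists>t<length (ws i). map (\<lambda>k. v (a + k)) [0..<l] ! t ! j \<noteq> 0"
          using lws t by (intro exI[of _ "t - a"]) simp
      qed
    qed (use lws sq[of i] sq[of "Suc i"] sSi a_def in \<open>simp_all del: upt_Suc add: nth_append\<close>)
  next
    fix i k assume k: "k < length (ws i)"
    have "(\<Sum>j<i. length (ws j)) = s i - s0"
      using telescope[OF smono, of i] by (simp add: ws_def s_def)
    moreover have "s0 \<le> s i" using telescope[OF smono, of i] by (simp add: s_def)
    ultimately show "\<beta> ((\<Sum>j<i. length (ws j)) + k) = ws i ! k"
      using k by (simp add: \<beta>_def ws_def)
  qed
  then show ?thesis using Jd q(1) conc U by blast
qed

theorem lemma7: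
  fixes \<Sigma> :: "'a set" and L :: "'a iword set"
  assumes "finite \<Sigma>"
    and "L \<subseteq> iwords \<Sigma>"
    and "LPBA_recognizable \<Sigma> L"
  shows "\<exists>(n::nat) (U :: nat \<Rightarrow> 'a list set) (V :: nat \<Rightarrow> 'a list set).
           (\<forall>i < n. parikh_recognizable \<Sigma> (U i) \<and> regular \<Sigma> (V i)) \<and>
           L = (\<Union>i < n. conc_omega (U i) (V i))"
proof -
  obtain d Q q0 \<Delta> F C where wf: "PA_wf \<Sigma> d Q q0 \<Delta> F" and sl: "semilinear d C"
    and L: "L = {\<alpha>. LPBA_accepts d q0 \<Delta> F C \<alpha>}"
    using assms(3) unfolding LPBA_recognizable_def by blast
  have "\<forall>J. \<exists>C'. semilinear d C' \<and> (\<forall>x. length x = d \<longrightarrow> (x \<in> C' \<longleftrightarrow> emb J d x \<in> C))"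
    using semilinear_pre[OF sl] by blast
  then obtain Cp where Cp: "\<And>J. semilinear d (Cp J) \<and> (\<forall>x. length x = d \<longrightarrow> (x \<in> Cp J \<longleftrightarrow> emb J d x \<in> C))"
    by metis
  have finI: "finite (Pow {..<d} \<times> Q)" using wf by (auto simp: PA_wf_def)
  obtain xs where xs: "set xs = Pow {..<d} \<times> Q" using finite_list[OF finI] by blast
  define U where "U i = {w. PA_accepts d q0 \<Delta> {snd (xs!i)} (Cp (fst (xs!i))) w}" for i
  define V where "V i = Vlang \<Delta> F d (fst (xs!i)) (snd (xs!i))" for i
  show ?thesis
  proof (rule exI[of _ "length xs"], rule exI[of _ U], rule exI[of _ V], rule conjI)
    show "\<forall>i<length xs. parikh_recognizable \<Sigma> (U i) \<and> regular \<Sigma> (V i)"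
    proof (intro allI impI)
      fix i assume i: "i < length xs"
      then have xi: "fst (xs!i) \<subseteq> {..<d}" "snd (xs!i) \<in> Q" using xs nth_mem by fastforce+
      have "PA_wf \<Sigma> d Q q0 \<Delta> {snd (xs!i)}" using wf xi(2) by (simp add: PA_wf_def)
      then have "parikh_recognizable \<Sigma> (U i)"
        unfolding parikh_recognizable_def U_def using Cp by blast
      moreover have "regular \<Sigma> (V i)" unfolding V_def by (rule Vlang_regular[OF wf xi])
      ultimately show "parikh_recognizable \<Sigma> (U i) \<and> regular \<Sigma> (V i)" ..
    qed
  next
    show "L = (\<Union>i<length xs. conc_omega (U i) (V i))"
    proof (intro set_eqI iffI)
      fix \<alpha> assume "\<alpha> \<in> L"
      then have "LPBA_accepts d q0 \<Delta> F C \<alpha>" using L by simp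
      from complete[OF wf this] obtain J q u \<beta> where Jq: "J \<subseteq> {..<d}" "q \<in> Q" "\<alpha> = conc u \<beta>"
        "\<forall>C'. (\<forall>x. length x = d \<longrightarrow> (x \<in> C' \<longleftrightarrow> emb J d x \<in> C)) \<longrightarrow> PA_accepts d q0 \<Delta> {q} C' u"
        "\<beta> \<in> omega_pow (Vlang \<Delta> F d J q)" by blast
      have "(J, q) \<in> set xs" using xs Jq by auto
      then obtain i where i: "i < length xs" "xs ! i = (J, q)" by (metis in_set_conv_nth)
      have "u \<in> U i" using Jq(4) Cp i(2) by (simp add: U_def)
      moreover have "\<beta> \<in> omega_pow (V i)" using Jq(5) i(2) by (simp add: V_def)
      ultimately have "\<alpha> \<in> conc_omega (U i) (V i)" using Jq(3) unfolding conc_omega_def by blast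
      then show "\<alpha> \<in> (\<Union>i<length xs. conc_omega (U i) (V i))" using i(1) by blast
    next
      fix \<alpha> assume "\<alpha> \<in> (\<Union>i<length xs. conc_omega (U i) (V i))"
      then obtain i where i: "i < length xs" "\<alpha> \<in> conc_omega (U i) (V i)" by blast
      then obtain u \<beta> where ub: "\<alpha> = conc u \<beta>" "u \<in> U i" "\<beta> \<in> omega_pow (V i)"
        unfolding conc_omega_def by blast
      have xi: "fst (xs!i) \<subseteq> {..<d}" using xs nth_mem i(1) by fastforce
      have "LPBA_accepts d q0 \<Delta> F C \<alpha>"
        unfolding ub(1)
        by (rule sound[OF wf xi conjunct2[OF Cp]]) (use ub in \<open>simp_all add: U_def V_def\<close>)
      then show "\<alpha> \<in> L" using L by simp
    qed
  qed
qed

end
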